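(* For every integer $j\ge 0$: (a) $f^*(3j+2,2)=2j+1+\dfrac{2j+1}{3j+2}$; (b) $f^*(3j+3,2)=2j+2+\dfrac{j+1}{3j+4}$.
   Context: For integers $d\ge 1$, $n\ge 1$, the triangular grid is $T_d(n)=\{(x_1,\dots,x_d)\in\mathbb{Z}_{\ge 0}^d : x_1+\dots+x_d\le n-1\}$. A fractional cover of $T_d(n)$ is an assignment of nonnegative weights $w(H)$ to affine hyperplanes $H$ of $\mathbb{R}^d$ (only finitely many nonzero) such that $\sum_{H\ni p} w(H)\ge 1$ for every $p\in T_d(n)$. $f^*(n,d)$ denotes the minimum of $\sum_H w(H)$ over all fractional covers of $T_d(n)$. *)

theory Defs
  imports Complex_Main
begin

text \<open>Points of R^d are represented as functions nat => real vanishing outside {0..<d}.\<close>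

definition rpoints :: "nat \<Rightarrow> (nat \<Rightarrow> real) set" where
  "rpoints d = {x. \<forall>i\<ge>d. x i = 0}"

definition affine_hyperplane :: "nat \<Rightarrow> (nat \<Rightarrow> real) set \<Rightarrow> bool" where
  "affine_hyperplane d H \<longleftrightarrow>
     (\<exists>a b. (\<exists>i<d. a i \<noteq> 0) \<and>
            H = {x \<in> rpoints d. (\<Sum>i<d. a i * x i) = b})"

definition tri_grid :: "nat \<Rightarrow> nat \<Rightarrow> (nat \<Rightarrow> real) set" where
  "tri_grid d n = {x \<in> rpoints d. (\<forall>i<d. \<exists>k::nat. x i = real k) \<and>
                                   (\<Sum>i<d. x i) \<le> real n - 1}"

definition wsupp :: "((nat \<Rightarrow> real) set \<Rightarrow> real) \<Rightarrow> (nat \<Rightarrow> real) set set" where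
  "wsupp w = {H. w H \<noteq> 0}"

definition frac_cover :: "nat \<Rightarrow> nat \<Rightarrow> ((nat \<Rightarrow> real) set \<Rightarrow> real) \<Rightarrow> bool" where
  "frac_cover d n w \<longleftrightarrow>
     finite (wsupp w) \<and> (\<forall>H. w H \<ge> 0) \<and>
     (\<forall>H \<in> wsupp w. affine_hyperplane d H) \<and>
     (\<forall>p \<in> tri_grid d n. (\<Sum>H \<in> {H \<in> wsupp w. p \<in> H}. w H) \<ge> 1)"

definition total_weight :: "((nat \<Rightarrow> real) set \<Rightarrow> real) \<Rightarrow> real" where
  "total_weight w = (\<Sum>H \<in> wsupp w. w H)"

definition fstar :: "nat \<Rightarrow> nat \<Rightarrow> real" where
  "fstar n d = Inf (total_weight ` {w. frac_cover d n w})"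

end

theory Submission
  imports Defs
begin

definition pt :: "nat \<Rightarrow> nat \<Rightarrow> (nat \<Rightarrow> real)" where
  "pt a b = (\<lambda>i. if i = 0 then real a else if i = 1 then real b else 0)"

definition grid :: "nat \<Rightarrow> (nat \<times> nat) set" where
  "grid n = {q. fst q + snd q < n}"

lemma sum_2: "(\<Sum>i<(2::nat). f i) = f 0 + (f 1 :: real)"
  by (simp add: numeral_2_eq_2)

lemma finite_grid: "finite (grid n)"
proof -
  have "grid n \<subseteq> {..<n} \<times> {..<n}" unfolding grid_def by auto
  then show ?thesis by (rule finite_subset) auto
qed

lemma pt_inj: "pt a b = pt c d \<Longrightarrow> a = c \<and> b = d"
proof -
  assume h: "pt a b = pt c d"
  have "pt a b 0 = pt c d 0" "pt a b 1 = pt c d 1" using h by auto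
  then show ?thesis by (simp add: pt_def)
qed

lemma pt_rpoints: "pt a b \<in> rpoints 2"
  by (simp add: rpoints_def pt_def)

lemma inj_pt: "inj_on (\<lambda>q. pt (fst q) (snd q)) A"
  by (auto simp: inj_on_def dest: pt_inj simp: prod_eq_iff)

lemma tri_grid_2: "n \<ge> 1 \<Longrightarrow> tri_grid 2 n = (\<lambda>q. pt (fst q) (snd q)) ` grid n"
proof
  assume n: "n \<ge> 1"
  show "tri_grid 2 n \<subseteq> (\<lambda>q. pt (fst q) (snd q)) ` grid n"
  proof
    fix x assume x: "x \<in> tri_grid 2 n"
    then have r: "x \<in> rpoints 2" and k: "\<forall>i<2. \<exists>k::nat. x i = real k"
      and s: "(\<Sum>i<2. x i) \<le> real n - 1" by (auto simp: tri_grid_def)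
    have "\<exists>k::nat. x 0 = real k" using k by simp
    then obtain a where a: "x 0 = real a" by blast
    have "\<exists>k::nat. x 1 = real k" using k by simp
    then obtain b where b: "x 1 = real b" by blast
    have "real a + real b \<le> real n - 1" using s a b by (simp add: sum_2)
    then have ab: "a + b < n" by linarith
    have "x = pt a b"
    proof
      fix i show "x i = pt a b i"
        using r a b by (cases "i = 0"; cases "i = 1") (auto simp: pt_def rpoints_def)
    qed
    then show "x \<in> (\<lambda>q. pt (fst q) (snd q)) ` grid n"
      using ab by (auto simp: grid_def image_iff intro!: exI[of _ "(a,b)"])
  qed
next
  assume n: "n \<ge> 1"
  show "(\<lambda>q. pt (fst q) (snd q)) ` grid n \<subseteq> tri_grid 2 n"
  proof
    fix x assume "x \<in> (\<lambda>q. pt (fst q) (snd q)) ` grid n"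
    then obtain a b where x: "x = pt a b" and ab: "a + b < n" by (auto simp: grid_def)
    have "\<forall>i<2. \<exists>k::nat. x i = real k"
    proof (intro allI impI)
      fix i :: nat assume "i < 2"
      then have "i = 0 \<or> i = 1" by auto
      then show "\<exists>k::nat. x i = real k" using x by (auto simp: pt_def)
    qed
    moreover have "(\<Sum>i<2. x i) \<le> real n - 1"
      using ab x by (simp add: sum_2 pt_def)
    ultimately show "x \<in> tri_grid 2 n" using x pt_rpoints by (simp add: tri_grid_def)
  qed
qed

lemma lower_bound_pts:
  fixes yv :: "(nat \<Rightarrow> real) \<Rightarrow> real"
  assumes fin: "finite T"
  assumes nonneg: "\<And>p. p \<in> T \<Longrightarrow> yv p \<ge> 0"
  assumes line: "\<And>H. affine_hyperplane 2 H \<Longrightarrow> (\<Sum>p\<in>{p\<in>T. p \<in> H}. yv p) \<le> 1"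
  assumes cov: "frac_cover 2 n w" and T: "T = tri_grid 2 n"
  shows "(\<Sum>p\<in>T. yv p) \<le> total_weight w"
proof -
  let ?W = "wsupp w"
  have finW: "finite ?W" and wnn: "\<And>H. w H \<ge> 0"
    and aff: "\<And>H. H \<in> ?W \<Longrightarrow> affine_hyperplane 2 H"
    and c: "\<And>p. p \<in> T \<Longrightarrow> (\<Sum>H\<in>{H\<in>?W. p\<in>H}. w H) \<ge> 1"
    using cov T by (auto simp: frac_cover_def)
  have "(\<Sum>p\<in>T. yv p) \<le> (\<Sum>p\<in>T. yv p * (\<Sum>H\<in>{H\<in>?W. p\<in>H}. w H))"
  proof (rule sum_mono)
    fix p assume p: "p \<in> T"
    show "yv p \<le> yv p * (\<Sum>H\<in>{H\<in>?W. p\<in>H}. w H)"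
      using mult_left_mono[OF c[OF p] nonneg[OF p]] by simp
  qed
  also have "\<dots> = (\<Sum>p\<in>T. (\<Sum>H\<in>{H\<in>?W. p\<in>H}. yv p * w H))"
    by (simp add: sum_distrib_left)
  also have "\<dots> = (\<Sum>H\<in>?W. (\<Sum>p\<in>{p\<in>T. p\<in>H}. yv p * w H))"
    using sum.swap_restrict[OF fin finW, of "\<lambda>p H. yv p * w H" "\<lambda>p H. p \<in> H"] by simp
  also have "\<dots> = (\<Sum>H\<in>?W. w H * (\<Sum>p\<in>{p\<in>T. p\<in>H}. yv p))"
    by (simp add: sum_distrib_left mult.commute)
  also have "\<dots> \<le> (\<Sum>H\<in>?W. w H * 1)"
    by (rule sum_mono, rule mult_left_mono[OF line[OF aff] wnn])
  finally show ?thesis by (simp add: total_weight_def)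
qed

lemma lower_bound_pairs:
  fixes Y :: "nat \<times> nat \<Rightarrow> real"
  assumes n: "n \<ge> 1"
  assumes nonneg: "\<And>q. q \<in> grid n \<Longrightarrow> Y q \<ge> 0"
  assumes line: "\<And>c0 c1 \<beta>. c0 \<noteq> 0 \<or> c1 \<noteq> 0 \<Longrightarrow>
      (\<Sum>q\<in>{q\<in>grid n. c0 * real (fst q) + c1 * real (snd q) = \<beta>}. Y q) \<le> 1"
  assumes cov: "frac_cover 2 n w"
  shows "(\<Sum>q\<in>grid n. Y q) \<le> total_weight w"
proof -
  define P where "P = (\<lambda>q. pt (fst q) (snd q))"
  define yv where "yv = (\<lambda>p::nat\<Rightarrow>real. Y (nat \<lfloor>p 0\<rfloor>, nat \<lfloor>p 1\<rfloor>))"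
  have yvP: "yv (P q) = Y q" for q by (simp add: yv_def P_def pt_def)
  have T: "tri_grid 2 n = P ` grid n" using tri_grid_2[OF n] by (simp add: P_def)
  have injP: "inj_on P A" for A unfolding P_def by (rule inj_pt)
  have "(\<Sum>p\<in>tri_grid 2 n. yv p) \<le> total_weight w"
  proof (rule lower_bound_pts[OF _ _ _ cov refl])
    show "finite (tri_grid 2 n)" using T finite_grid by simp
    show "\<And>p. p \<in> tri_grid 2 n \<Longrightarrow> yv p \<ge> 0" using T nonneg yvP by auto
    fix H assume "affine_hyperplane 2 H"
    then obtain a b where a: "\<exists>i<2. a i \<noteq> (0::real)"
      and H: "H = {x \<in> rpoints 2. (\<Sum>i<2. a i * x i) = b}"
      by (auto simp: affine_hyperplane_def)
    have a01: "a 0 \<noteq> 0 \<or> a 1 \<noteq> 0" using a by (auto simp: less_2_cases_iff)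
    have "{p\<in>tri_grid 2 n. p \<in> H} = P ` {q\<in>grid n. a 0 * real (fst q) + a 1 * real (snd q) = b}"
      unfolding T H by (auto simp: P_def sum_2 pt_rpoints image_iff; force simp: pt_def)
    then have "(\<Sum>p\<in>{p\<in>tri_grid 2 n. p \<in> H}. yv p)
        = (\<Sum>q\<in>{q\<in>grid n. a 0 * real (fst q) + a 1 * real (snd q) = b}. Y q)"
      by (simp add: sum.reindex[OF injP] yvP)
    also have "\<dots> \<le> 1" by (rule line[OF a01])
    finally show "(\<Sum>p\<in>{p\<in>tri_grid 2 n. p \<in> H}. yv p) \<le> 1" .
  qed
  also have "(\<Sum>p\<in>tri_grid 2 n. yv p) = (\<Sum>q\<in>grid n. Y q)"
    unfolding T by (simp add: sum.reindex[OF injP] yvP)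
  finally show ?thesis by simp
qed

definition Lx :: "nat \<Rightarrow> (nat \<Rightarrow> real) set" where "Lx t = {x \<in> rpoints 2. x 0 = real t}"
definition Ly :: "nat \<Rightarrow> (nat \<Rightarrow> real) set" where "Ly t = {x \<in> rpoints 2. x 1 = real t}"
definition Ls :: "nat \<Rightarrow> (nat \<Rightarrow> real) set" where "Ls t = {x \<in> rpoints 2. x 0 + x 1 = real t}"

definition rp :: "real \<Rightarrow> real \<Rightarrow> (nat \<Rightarrow> real)" where
  "rp a b = (\<lambda>i. if i = 0 then a else if i = 1 then b else 0)"

lemma rp_rpoints[simp]: "rp a b \<in> rpoints 2" by (simp add: rpoints_def rp_def)
lemma rp0[simp]: "rp a b 0 = a" and rp1[simp]: "rp a b (Suc 0) = b" by (simp_all add: rp_def)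

lemma Lx_eq[simp]: "Lx t = Lx s \<longleftrightarrow> t = s"
proof
  assume h: "Lx t = Lx s"
  have "rp (real t) 0 \<in> Lx t" by (simp add: Lx_def)
  then have "rp (real t) 0 \<in> Lx s" using h by simp
  then show "t = s" by (simp add: Lx_def)
qed simp
lemma Ly_eq[simp]: "Ly t = Ly s \<longleftrightarrow> t = s"
proof
  assume h: "Ly t = Ly s"
  have "rp 0 (real t) \<in> Ly t" by (simp add: Ly_def)
  then have "rp 0 (real t) \<in> Ly s" using h by simp
  then show "t = s" by (simp add: Ly_def)
qed simp
lemma Ls_eq[simp]: "Ls t = Ls s \<longleftrightarrow> t = s"
proof
  assume h: "Ls t = Ls s"
  have "rp (real t) 0 \<in> Ls t" by (simp add: Ls_def)
  then have "rp (real t) 0 \<in> Ls s" using h by simp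
  then show "t = s" by (simp add: Ls_def)
qed simp
lemma Lx_Ly[simp]: "Lx t \<noteq> Ly s" "Ly s \<noteq> Lx t"
proof -
  have "rp (real t) (real s + 1) \<in> Lx t" "rp (real t) (real s + 1) \<notin> Ly s" by (simp_all add: Lx_def Ly_def)
  then show "Lx t \<noteq> Ly s" "Ly s \<noteq> Lx t" by auto
qed
lemma Lx_Ls[simp]: "Lx t \<noteq> Ls s" "Ls s \<noteq> Lx t"
proof -
  have "rp (real t) (real s - real t + 1) \<in> Lx t" "rp (real t) (real s - real t + 1) \<notin> Ls s" by (simp_all add: Lx_def Ls_def)
  then show "Lx t \<noteq> Ls s" "Ls s \<noteq> Lx t" by auto
qed
lemma Ly_Ls[simp]: "Ly t \<noteq> Ls s" "Ls s \<noteq> Ly t"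
proof -
  have "rp (real s - real t + 1) (real t) \<in> Ly t" "rp (real s - real t + 1) (real t) \<notin> Ls s" by (simp_all add: Ly_def Ls_def)
  then show "Ly t \<noteq> Ls s" "Ls s \<noteq> Ly t" by auto
qed

lemma aff_Lx: "affine_hyperplane 2 (Lx t)"
  unfolding affine_hyperplane_def
  by (rule exI[of _ "\<lambda>i. if i = 0 then 1 else 0"], rule exI[of _ "real t"]) (auto simp: sum_2 Lx_def intro!: exI[of _ "0::nat"])
lemma aff_Ly: "affine_hyperplane 2 (Ly t)"
  unfolding affine_hyperplane_def
  by (rule exI[of _ "\<lambda>i. if i = 1 then 1 else 0"], rule exI[of _ "real t"]) (auto simp: sum_2 Ly_def intro!: exI[of _ "1::nat"])
lemma aff_Ls: "affine_hyperplane 2 (Ls t)"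
  unfolding affine_hyperplane_def
  by (rule exI[of _ "\<lambda>i. 1"], rule exI[of _ "real t"]) (auto simp: sum_2 Ls_def intro!: exI[of _ "0::nat"])

lemma upper_bound:
  fixes g :: "nat \<Rightarrow> real" and n K S :: nat
  assumes S: "S + 1 = n" and K: "K \<le> n"
  assumes gpos: "\<And>t. t < K \<Longrightarrow> g t > 0" and gz: "\<And>t. t \<ge> K \<Longrightarrow> g t = 0"
  assumes cov: "\<And>a b. a + b \<le> S \<Longrightarrow> g a + g b + g (S - a - b) \<ge> 1"
  shows "\<exists>w. frac_cover 2 n w \<and> total_weight w = 3 * (\<Sum>t<K. g t)"
proof -
  define w where "w H = (\<Sum>t<K. (if H = Lx t then g t else 0) + (if H = Ly t then g t else 0)
                         + (if H = Ls (S - t) then g t else 0))" for H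
  have Ls_inj: "Ls (S - t) = Ls (S - s) \<longleftrightarrow> t = s" if "t < K" "s < K" for t s
    using that K S by auto
  have wLx: "w (Lx a) = g a" for a
  proof -
    have "w (Lx a) = (if a < K then g a else 0)" by (simp add: w_def sum.delta')
    then show ?thesis using gz by auto
  qed
  have wLy: "w (Ly a) = g a" for a
  proof -
    have "w (Ly a) = (if a < K then g a else 0)" by (simp add: w_def sum.delta')
    then show ?thesis using gz by auto
  qed
  have wLs: "w (Ls m) = g (S - m)" if "m \<le> S" for m
  proof -
    have e: "(m = S - t) = (t = S - m)" if "t < K" for t using that \<open>m \<le> S\<close> K S by auto
    have "w (Ls m) = (\<Sum>t<K. if t = S - m then g t else 0)"
      unfolding w_def by (rule sum.cong) (auto simp: e)
    also have "\<dots> = g (S - m)" using gz by (simp add: sum.delta')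
    finally show ?thesis .
  qed
  have wother: "w H = 0" if "H \<notin> Lx ` {..<K} \<union> Ly ` {..<K} \<union> (\<lambda>t. Ls (S - t)) ` {..<K}" for H
    using that unfolding w_def by (intro sum.neutral) auto
  have supp: "wsupp w = Lx ` {..<K} \<union> Ly ` {..<K} \<union> (\<lambda>t. Ls (S - t)) ` {..<K}"
  proof (rule set_eqI)
    fix H
    show "H \<in> wsupp w \<longleftrightarrow> H \<in> Lx ` {..<K} \<union> Ly ` {..<K} \<union> (\<lambda>t. Ls (S - t)) ` {..<K}"
    proof
      assume "H \<in> wsupp w" then show "H \<in> Lx ` {..<K} \<union> Ly ` {..<K} \<union> (\<lambda>t. Ls (S - t)) ` {..<K}"
        using wother by (auto simp: wsupp_def)
    next
      assume H: "H \<in> Lx ` {..<K} \<union> Ly ` {..<K} \<union> (\<lambda>t. Ls (S - t)) ` {..<K}"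
      have wLs': "w (Ls (S - t)) = g t" if "t < K" for t
        using wLs[of "S - t"] that K S by simp
      from H obtain t where t: "t < K" and "H = Lx t \<or> H = Ly t \<or> H = Ls (S - t)" by blast
      then have "w H = g t" using wLx wLy wLs' by auto
      then have "w H \<noteq> 0" using gpos[OF t] by simp
      then show "H \<in> wsupp w" by (simp add: wsupp_def)
    qed
  qed
  have wnn: "w H \<ge> 0" for H
    unfolding w_def by (rule sum_nonneg) (auto intro: less_imp_le[OF gpos])
  have total: "total_weight w = 3 * (\<Sum>t<K. g t)"
  proof -
    have d1: "Lx ` {..<K} \<inter> Ly ` {..<K} = {}" by auto
    have d2: "(Lx ` {..<K} \<union> Ly ` {..<K}) \<inter> (\<lambda>t. Ls (S - t)) ` {..<K} = {}" by auto
    have i3: "inj_on (\<lambda>t. Ls (S - t)) {..<K}" using Ls_inj by (auto simp: inj_on_def)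
    have "total_weight w = (\<Sum>H\<in>Lx ` {..<K}. w H) + (\<Sum>H\<in>Ly ` {..<K}. w H) + (\<Sum>H\<in>(\<lambda>t. Ls (S - t)) ` {..<K}. w H)"
      unfolding total_weight_def supp
      by (simp add: sum.union_disjoint[OF _ _ d2] sum.union_disjoint[OF _ _ d1])
    also have "\<dots> = (\<Sum>t<K. g t) + (\<Sum>t<K. g t) + (\<Sum>t<K. g t)"
      using K S by (simp add: sum.reindex inj_on_def sum.reindex[OF i3] wLx wLy wLs)
    finally show ?thesis by simp
  qed
  have fc: "frac_cover 2 n w"
    unfolding frac_cover_def
  proof (intro conjI allI ballI)
    show "finite (wsupp w)" unfolding supp by simp
    show "\<And>H. 0 \<le> w H" by (rule wnn)
    show "affine_hyperplane 2 H" if "H \<in> wsupp w" for H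
      using that unfolding supp by (auto simp: aff_Lx aff_Ly aff_Ls)
    fix p assume p: "p \<in> tri_grid 2 n"
    have "p \<in> (\<lambda>q. pt (fst q) (snd q)) ` grid n" using p tri_grid_2[of n] S by simp
    then obtain q where q: "q \<in> grid n" "p = pt (fst q) (snd q)" by blast
    define a where "a = fst q"
    define b where "b = snd q"
    have pab: "p = pt a b" and ab: "a + b < n" using q by (simp_all add: a_def b_def grid_def)
    have abS: "a + b \<le> S" using ab S by simp
    let ?X = "{Lx a, Ly b, Ls (a + b)}"
    have inX: "p \<in> H" if "H \<in> ?X" for H
      using that pab pt_rpoints[of a b] by (auto simp: Lx_def Ly_def Ls_def) (auto simp: pt_def)
    have "1 \<le> g a + g b + g (S - a - b)" using cov[OF abS] .
    also have "\<dots> = (\<Sum>H\<in>?X. w H)"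
      using abS by (simp add: wLx wLy wLs diff_diff_add)
    also have "\<dots> = (\<Sum>H\<in>?X \<inter> wsupp w. w H)"
      by (rule sum.mono_neutral_right) (auto simp: wsupp_def)
    also have "\<dots> \<le> (\<Sum>H\<in>{H \<in> wsupp w. p \<in> H}. w H)"
    proof (rule sum_mono2)
      have "finite (wsupp w)" unfolding supp by simp
      then show "finite {H \<in> wsupp w. p \<in> H}" by simp
      show "?X \<inter> wsupp w \<subseteq> {H \<in> wsupp w. p \<in> H}" using inX by blast
      show "\<And>H. H \<in> {H \<in> wsupp w. p \<in> H} - ?X \<inter> wsupp w \<Longrightarrow> 0 \<le> w H" using wnn by blast
    qed
    finally show "1 \<le> (\<Sum>H\<in>{H \<in> wsupp w. p \<in> H}. w H)" .
  qed
  show ?thesis using fc total by blast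
qed

definition gapp :: "('a \<Rightarrow> nat) \<Rightarrow> 'a set \<Rightarrow> bool" where
  "gapp f A \<longleftrightarrow> (\<forall>p\<in>A. \<forall>q\<in>A. p \<noteq> q \<longrightarrow> f p + 2 \<le> f q \<or> f q + 2 \<le> f p)"

lemma slanted_gap:
  fixes c0 c1 \<beta> :: real
  assumes c: "c0 \<noteq> 0" "c1 \<noteq> 0" "c0 \<noteq> c1"
  assumes LS: "\<And>q. q \<in> L \<Longrightarrow> fst q + snd q \<le> S"
  assumes L: "\<And>q. q \<in> L \<Longrightarrow> c0 * real (fst q) + c1 * real (snd q) = \<beta>"
  shows "gapp fst L \<or> gapp snd L \<or> gapp (\<lambda>q. S - fst q - snd q) L"
proof -
  define dx where "dx p q = int (fst q) - int (fst p)" for p q :: "nat \<times> nat"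
  define dy where "dy p q = int (snd q) - int (snd p)" for p q :: "nat \<times> nat"
  have key: "c0 * real_of_int (dx p q) + c1 * real_of_int (dy p q) = 0" if "p \<in> L" "q \<in> L" for p q
    using L[OF that(1)] L[OF that(2)] by (simp add: dx_def dy_def algebra_simps)
  have dx0: "dx p q \<noteq> 0" if "p \<in> L" "q \<in> L" "p \<noteq> q" for p q
  proof
    assume h: "dx p q = 0"
    then have "dy p q = 0" using key[OF that(1,2)] c(2) by simp
    then show False using h that(3) by (simp add: dx_def dy_def prod_eq_iff)
  qed
  show ?thesis
  proof (cases "gapp fst L")
    case True then show ?thesis by simp
  next
    case False
    then obtain p0 q0 where pq: "p0 \<in> L" "q0 \<in> L" "p0 \<noteq> q0"
      and ng: "\<not> (fst p0 + 2 \<le> fst q0 \<or> fst q0 + 2 \<le> fst p0)"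
      by (auto simp: gapp_def)
    have d1: "dx p0 q0 = 1 \<or> dx p0 q0 = -1"
      using ng dx0[OF pq] by (auto simp: dx_def)
    define r where "r = dy p0 q0 * dx p0 q0"
    have c0r: "c0 = - c1 * real_of_int r"
    proof -
      have "c0 * real_of_int (dx p0 q0) + c1 * real_of_int (dy p0 q0) = 0" by (rule key[OF pq(1,2)])
      then have "(c0 * real_of_int (dx p0 q0) + c1 * real_of_int (dy p0 q0)) * real_of_int (dx p0 q0) = 0" by simp
      then show ?thesis using d1 by (auto simp: r_def algebra_simps)
    qed
    have dyr: "dy p q = r * dx p q" if "p \<in> L" "q \<in> L" for p q
    proof -
      have "c1 * (real_of_int (dy p q) - real_of_int r * real_of_int (dx p q)) = 0"
        using key[OF that] c0r by (simp add: algebra_simps)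
      then have "real_of_int (dy p q) = real_of_int r * real_of_int (dx p q)" using c(2) by simp
      then show ?thesis by (metis of_int_eq_iff of_int_mult)
    qed
    have rne: "r \<noteq> -1" "r \<noteq> 0" using c0r c by auto
    show ?thesis
    proof (cases "r = 1")
      case True
      have "gapp (\<lambda>q. S - fst q - snd q) L"
        unfolding gapp_def
      proof (intro ballI impI)
        fix p q assume pq': "p \<in> L" "q \<in> L" "p \<noteq> q"
        have "dy p q = dx p q" using dyr[OF pq'(1,2)] True by simp
        moreover have "dx p q \<noteq> 0" by (rule dx0[OF pq'])
        moreover have "fst p + snd p \<le> S" "fst q + snd q \<le> S" using LS pq' by auto
        ultimately show "S - fst p - snd p + 2 \<le> S - fst q - snd q \<or> S - fst q - snd q + 2 \<le> S - fst p - snd p"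
          by (auto simp: dx_def dy_def)
      qed
      then show ?thesis by simp
    next
      case False
      then have r2: "\<bar>r\<bar> \<ge> 2" using rne by auto
      have "gapp snd L"
        unfolding gapp_def
      proof (intro ballI impI)
        fix p q assume pq': "p \<in> L" "q \<in> L" "p \<noteq> q"
        have "\<bar>dx p q\<bar> \<ge> 1" using dx0[OF pq'] by auto
        then have "\<bar>r\<bar> * \<bar>dx p q\<bar> \<ge> 2 * 1" using r2 by (intro mult_mono) auto
        then have "\<bar>dy p q\<bar> \<ge> 2" using dyr[OF pq'(1,2)] by (simp add: abs_mult)
        then show "snd p + 2 \<le> snd q \<or> snd q + 2 \<le> snd p" by (auto simp: dy_def)
      qed
      then show ?thesis by simp
    qed
  qed
qed

lemma gap_card:
  fixes K :: "nat set"
  assumes fin: "finite K" and sub: "K \<subseteq> {..M}" and g: "gapp id K"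
  shows "card K \<le> M div 2 + 1" and "card K = M div 2 + 1 \<Longrightarrow> even M \<Longrightarrow> M \<in> K"
proof -
  have inj: "inj_on (\<lambda>x. x div 2) K"
  proof (rule inj_onI)
    fix x y assume xy: "x \<in> K" "y \<in> K" "x div 2 = y div 2"
    show "x = y"
    proof (rule ccontr)
      assume "x \<noteq> y"
      then have "x + 2 \<le> y \<or> y + 2 \<le> x" using g xy unfolding gapp_def by auto
      then show False using xy(3) by linarith
    qed
  qed
  have im: "(\<lambda>x. x div 2) ` K \<subseteq> {..M div 2}" using sub by (auto intro: div_le_mono)
  have c: "card K = card ((\<lambda>x. x div 2) ` K)" using card_image[OF inj] by simp
  show "card K \<le> M div 2 + 1" using c card_mono[OF _ im] by simp
  assume ce: "card K = M div 2 + 1" and ev: "even M"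
  have "(\<lambda>x. x div 2) ` K = {..M div 2}"
    using card_subset_eq[OF _ im] c ce by simp
  then have "M div 2 \<in> (\<lambda>x. x div 2) ` K" by simp
  then obtain x where x: "x \<in> K" "x div 2 = M div 2" by (auto simp del: image_iff)
  have "x \<le> M" using x sub by auto
  then have "x = M" using x ev by presburger
  then show "M \<in> K" using x by simp
qed

lemma line_bound:
  fixes F :: "nat \<Rightarrow> nat \<Rightarrow> nat \<Rightarrow> real" and S n :: nat
  assumes n: "S + 1 = n"
  assumes sym1: "\<And>x y z. F x y z = F y x z" and sym2: "\<And>x y z. F x y z = F x z y"
  assumes fam: "\<And>t. t \<le> S \<Longrightarrow> (\<Sum>b\<le>S-t. F t b (S-t-b)) \<le> 1"
  assumes slant: "\<And>A f. A \<subseteq> grid n \<Longrightarrow> f = fst \<or> f = snd \<or> f = (\<lambda>q. S - fst q - snd q) \<Longrightarrow> gapp f A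
      \<Longrightarrow> (\<Sum>q\<in>A. F (fst q) (snd q) (S - fst q - snd q)) \<le> 1"
  assumes c: "c0 \<noteq> 0 \<or> c1 \<noteq> 0"
  shows "(\<Sum>q\<in>{q\<in>grid n. c0 * real (fst q) + c1 * real (snd q) = \<beta>}. F (fst q) (snd q) (S - fst q - snd q)) \<le> 1"
proof -
  define L where "L = {q\<in>grid n. c0 * real (fst q) + c1 * real (snd q) = \<beta>}"
  define Y where "Y q = F (fst q) (snd q) (S - fst q - snd q)" for q
  have Lg: "L \<subseteq> grid n" by (auto simp: L_def)
  have gS: "q \<in> grid n \<longleftrightarrow> fst q + snd q \<le> S" for q using n by (auto simp: grid_def)
  have "sum Y L \<le> 1"
  proof (cases "L = {}")
    case True then show ?thesis by simp
  next
    case False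
    then obtain q0 where q0: "q0 \<in> L" by auto
    have q0S: "fst q0 + snd q0 \<le> S" using q0 gS by (auto simp: L_def)
    show ?thesis
    proof (cases "c1 = 0")
      case True
      then have c0: "c0 \<noteq> 0" using c by simp
      let ?t = "fst q0"
      have "L = (\<lambda>b. (?t, b)) ` {..S - ?t}"
      proof (rule set_eqI)
        fix q
        have "q \<in> L \<longleftrightarrow> q \<in> grid n \<and> c0 * real (fst q) = c0 * real ?t"
          using q0 True by (auto simp: L_def)
        also have "\<dots> \<longleftrightarrow> q \<in> grid n \<and> fst q = ?t" using c0 by simp
        also have "\<dots> \<longleftrightarrow> q \<in> (\<lambda>b. (?t, b)) ` {..S - ?t}" using gS q0S by (cases q) auto
        finally show "q \<in> L \<longleftrightarrow> q \<in> (\<lambda>b. (?t, b)) ` {..S - ?t}" .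
      qed
      then have "sum Y L = (\<Sum>b\<le>S - ?t. F ?t b (S - ?t - b))"
        by (simp add: sum.reindex inj_on_def Y_def)
      also have "\<dots> \<le> 1" using fam q0S by simp
      finally show ?thesis .
    next
      case c1: False
      show ?thesis
      proof (cases "c0 = 0")
        case True
        let ?t = "snd q0"
        have "L = (\<lambda>a. (a, ?t)) ` {..S - ?t}"
        proof (rule set_eqI)
          fix q
          have "q \<in> L \<longleftrightarrow> q \<in> grid n \<and> c1 * real (snd q) = c1 * real ?t"
            using q0 True by (auto simp: L_def)
          also have "\<dots> \<longleftrightarrow> q \<in> grid n \<and> snd q = ?t" using c1 by simp
          also have "\<dots> \<longleftrightarrow> q \<in> (\<lambda>a. (a, ?t)) ` {..S - ?t}" using gS q0S by (cases q) auto
          finally show "q \<in> L \<longleftrightarrow> q \<in> (\<lambda>a. (a, ?t)) ` {..S - ?t}" .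
        qed
        then have "sum Y L = (\<Sum>a\<le>S - ?t. F a ?t (S - a - ?t))"
          by (simp add: sum.reindex inj_on_def Y_def)
        also have "\<dots> = (\<Sum>a\<le>S - ?t. F ?t a (S - ?t - a))"
          by (rule sum.cong) (auto simp: sym1[of _ ?t] diff_commute add.commute)
        also have "\<dots> \<le> 1" using fam q0S by simp
        finally show ?thesis .
      next
        case c0: False
        show ?thesis
        proof (cases "c0 = c1")
          case True
          let ?m = "fst q0 + snd q0"
          have "L = (\<lambda>a. (a, ?m - a)) ` {..?m}"
          proof (rule set_eqI)
            fix q
            have "q \<in> L \<longleftrightarrow> q \<in> grid n \<and> c0 * (real (fst q) + real (snd q)) = c0 * (real (fst q0) + real (snd q0))"
              using q0 True by (auto simp: L_def algebra_simps)
            also have "\<dots> \<longleftrightarrow> q \<in> grid n \<and> fst q + snd q = ?m" using c0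
              by (metis mult_cancel_left of_nat_add of_nat_eq_iff)
            also have "\<dots> \<longleftrightarrow> q \<in> (\<lambda>a. (a, ?m - a)) ` {..?m}" using gS q0S by (cases q) auto
            finally show "q \<in> L \<longleftrightarrow> q \<in> (\<lambda>a. (a, ?m - a)) ` {..?m}" .
          qed
          then have "sum Y L = (\<Sum>a\<le>?m. F a (?m - a) (S - a - (?m - a)))"
            by (simp add: sum.reindex inj_on_def Y_def)
          also have "\<dots> = (\<Sum>a\<le>S - (S - ?m). F (S - ?m) a (S - (S - ?m) - a))"
          proof (rule sum.cong)
            show "{..?m} = {..S - (S - ?m)}" using q0S by simp
            fix a assume "a \<in> {..S - (S - ?m)}"
            then have a: "a \<le> ?m" using q0S by simp
            have "F a (?m - a) (S - a - (?m - a)) = F a (?m - a) (S - ?m)" using a by (simp add: diff_diff_add)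
            also have "\<dots> = F (S - ?m) a (?m - a)" using sym1 sym2 by metis
            also have "\<dots> = F (S - ?m) a (S - (S - ?m) - a)" using q0S by simp
            finally show "F a (?m - a) (S - a - (?m - a)) = F (S - ?m) a (S - (S - ?m) - a)" .
          qed
          also have "\<dots> \<le> 1" by (rule fam) simp
          finally show ?thesis .
        next
          case False
          have "gapp fst L \<or> gapp snd L \<or> gapp (\<lambda>q. S - fst q - snd q) L"
            by (rule slanted_gap[OF c0 c1 False, of L S \<beta>]) (auto simp: L_def gS)
          then show ?thesis unfolding Y_def using slant[OF Lg] by blast
        qed
      qed
    qed
  qed
  then show ?thesis by (simp add: L_def Y_def)
qed

lemma aser: "2 * (\<Sum>c\<in>{p..<p+d}. a * int c + b) = int d * (a * (2 * int p + int d - 1) + 2 * b)"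
  by (induction d) (auto simp: algebra_simps)

definition ua :: "nat \<Rightarrow> nat \<Rightarrow> int" where
 "ua j c = (if c \<le> j then (2*int j+1)*(3*(int j - int c)+1)
            else if c \<le> 2*j then (int j+1)*(3*(int c - int j) - 1) else 0)"

definition Da :: "nat \<Rightarrow> int" where "Da j = (int j + 1) * (3*int j+2)^2"

definition LNa :: "nat \<Rightarrow> nat \<Rightarrow> int" where
 "LNa j t = (\<Sum>b\<le>3*j+1-t. if t \<le> 2*j+1 \<and> b \<le> 2*j+1 \<and> 3*j+1-t-b \<le> 2*j+1
     then ua j t + ua j b + ua j (3*j+1-t-b) else 0)"

lemma ua_low: "c \<le> j \<Longrightarrow> ua j c = - 3 * (2*int j+1) * int c + (2*int j+1)*(3*int j+1)"
  by (simp add: ua_def algebra_simps)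
lemma ua_mid: "j < c \<Longrightarrow> c \<le> 2*j \<Longrightarrow> ua j c = 3 * (int j+1) * int c - (int j+1)*(3*int j+1)"
  by (simp add: ua_def algebra_simps)
lemma ua_top: "2*j < c \<Longrightarrow> ua j c = 0"
  by (simp add: ua_def)

lemma aser2: "p \<le> q \<Longrightarrow> 2 * (\<Sum>c\<in>{p..<q}. a * int c + b) = (int q - int p) * (a * (int p + int q - 1) + 2 * b)"
  using aser[of a b p "q - p"] by (simp add: algebra_simps of_nat_diff)

lemma sum_low_a: "2 * (\<Sum>c\<in>{p..<q}. ua j c) = (int q - int p) * (- 3 * (2*int j+1) * (int p + int q - 1) + 2 * ((2*int j+1)*(3*int j+1)))"
  if "p \<le> q" "q \<le> j + 1"
proof -
  have "(\<Sum>c\<in>{p..<q}. ua j c) = (\<Sum>c\<in>{p..<q}. (- 3 * (2*int j+1)) * int c + (2*int j+1)*(3*int j+1))"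
    using that by (intro sum.cong) (auto simp: ua_low)
  then show ?thesis using aser2[OF that(1)] by simp
qed

lemma sum_mid_a: "2 * (\<Sum>c\<in>{p..<q}. ua j c) = (int q - int p) * (3 * (int j+1) * (int p + int q - 1) + 2 * (- (int j+1)*(3*int j+1)))"
  if "j < p" "p \<le> q" "q \<le> 2*j + 1"
proof -
  have "(\<Sum>c\<in>{p..<q}. ua j c) = (\<Sum>c\<in>{p..<q}. (3 * (int j+1)) * int c + (- (int j+1)*(3*int j+1)))"
    using that by (intro sum.cong) (auto simp: ua_mid algebra_simps)
  then show ?thesis using aser2[OF that(2)] by simp
qed

lemma refl_sum:
  fixes f :: "nat \<Rightarrow> 'a::comm_monoid_add" and m lo hi :: nat
  assumes "m + 1 = lo + hi" "lo < hi"
  shows "(\<Sum>b\<in>{lo..<hi}. f (m - b)) = (\<Sum>b\<in>{lo..<hi}. f b)"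
proof -
  have "(\<Sum>b\<in>{lo..<hi}. f (m - b)) = (\<Sum>i\<in>{lo..<hi}. f (m - (hi + lo - Suc i)))"
    by (rule sum.atLeastLessThan_rev)
  also have "\<dots> = (\<Sum>i\<in>{lo..<hi}. f i)"
  proof (rule sum.cong)
    fix i assume "i \<in> {lo..<hi}"
    then have "m - (hi + lo - Suc i) = i" using assms by auto
    then show "f (m - (hi + lo - Suc i)) = f i" by simp
  qed simp
  finally show ?thesis .
qed

lemma LNa_interval:
  assumes "{b. b \<le> 3*j+1-t \<and> (t \<le> 2*j+1 \<and> b \<le> 2*j+1 \<and> 3*j+1-t-b \<le> 2*j+1)} = {lo..<hi}"
    and "3*j+1-t + 1 = lo + hi" "lo < hi"
  shows "LNa j t = int (hi - lo) * ua j t + 2 * (\<Sum>b\<in>{lo..<hi}. ua j b)"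
proof -
  have "LNa j t = (\<Sum>b\<in>{b\<in>{..3*j+1-t}. t \<le> 2*j+1 \<and> b \<le> 2*j+1 \<and> 3*j+1-t-b \<le> 2*j+1}.
       ua j t + ua j b + ua j (3*j+1-t-b))"
    unfolding LNa_def by (rule sum.inter_filter[symmetric]) simp
  also have "{b\<in>{..3*j+1-t}. t \<le> 2*j+1 \<and> b \<le> 2*j+1 \<and> 3*j+1-t-b \<le> 2*j+1} = {lo..<hi}"
    using assms(1) by auto
  also have "(\<Sum>b\<in>{lo..<hi}. ua j t + ua j b + ua j (3*j+1-t-b))
      = int (hi - lo) * ua j t + (\<Sum>b\<in>{lo..<hi}. ua j b) + (\<Sum>b\<in>{lo..<hi}. ua j (3*j+1-t-b))"
    by (simp add: sum.distrib)
  also have "(\<Sum>b\<in>{lo..<hi}. ua j (3*j+1-t-b)) = (\<Sum>b\<in>{lo..<hi}. ua j b)"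
    using refl_sum[of "3*j+1-t" lo hi "ua j"] assms(2,3) by simp
  finally show ?thesis by simp
qed

lemma LNa_low: assumes "t \<le> j" shows "LNa j t = Da j"
proof -
  have e: "LNa j t = int (2*j+2 - (j - t)) * ua j t + 2 * (\<Sum>b\<in>{j-t..<2*j+2}. ua j b)"
    by (rule LNa_interval) (use assms in auto)
  have s1: "(\<Sum>b\<in>{j-t..<2*j+2}. ua j b) = (\<Sum>b\<in>{j-t..<j+1}. ua j b) + (\<Sum>b\<in>{j+1..<2*j+2}. ua j b)"
    by (rule sum.atLeastLessThan_concat[symmetric]) auto
  have s2: "(\<Sum>b\<in>{j+1..<2*j+2}. ua j b) = (\<Sum>b\<in>{j+1..<2*j+1}. ua j b) + (\<Sum>b\<in>{2*j+1..<2*j+2}. ua j b)"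
    by (rule sum.atLeastLessThan_concat[symmetric]) auto
  have l: "2 * (\<Sum>b\<in>{j-t..<j+1}. ua j b) = (int (j+1) - int (j-t)) * (- 3 * (2*int j+1) * (int (j-t) + int (j+1) - 1) + 2 * ((2*int j+1)*(3*int j+1)))"
    by (rule sum_low_a) auto
  have m: "2 * (\<Sum>b\<in>{j+1..<2*j+1}. ua j b) = (int (2*j+1) - int (j+1)) * (3 * (int j+1) * (int (j+1) + int (2*j+1) - 1) + 2 * (- (int j+1)*(3*int j+1)))"
    by (rule sum_mid_a) auto
  have tp: "(\<Sum>b\<in>{2*j+1..<2*j+2}. ua j b) = 0" by (simp add: ua_top)
  have ut: "ua j t = - 3 * (2*int j+1) * int t + (2*int j+1)*(3*int j+1)" using assms by (rule ua_low)
  have c1: "int (2*j+2 - (j - t)) = int j + 2 + int t" "int (j - t) = int j - int t" using assms by auto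
  have "LNa j t = int (2*j+2 - (j - t)) * ua j t + 2 * (\<Sum>b\<in>{j-t..<j+1}. ua j b) + 2 * (\<Sum>b\<in>{j+1..<2*j+1}. ua j b)"
    using e s1 s2 tp by (simp add: algebra_simps)
  also have "\<dots> = Da j"
    unfolding l m ut c1 Da_def by (simp add: algebra_simps power2_eq_square)
  finally show ?thesis .
qed

lemma LNa_mid: assumes "j < t" "t \<le> 2*j" shows "LNa j t = Da j"
proof -
  have e: "LNa j t = int (3*j+2-t - 0) * ua j t + 2 * (\<Sum>b\<in>{0..<3*j+2-t}. ua j b)"
    by (rule LNa_interval) (use assms in auto)
  have s1: "(\<Sum>b\<in>{0..<3*j+2-t}. ua j b) = (\<Sum>b\<in>{0..<j+1}. ua j b) + (\<Sum>b\<in>{j+1..<3*j+2-t}. ua j b)"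
    by (rule sum.atLeastLessThan_concat[symmetric]) (use assms in auto)
  have l: "2 * (\<Sum>b\<in>{0..<j+1}. ua j b) = (int (j+1) - int 0) * (- 3 * (2*int j+1) * (int 0 + int (j+1) - 1) + 2 * ((2*int j+1)*(3*int j+1)))"
    by (rule sum_low_a) auto
  have m: "2 * (\<Sum>b\<in>{j+1..<3*j+2-t}. ua j b) = (int (3*j+2-t) - int (j+1)) * (3 * (int j+1) * (int (j+1) + int (3*j+2-t) - 1) + 2 * (- (int j+1)*(3*int j+1)))"
    by (rule sum_mid_a) (use assms in auto)
  have ut: "ua j t = 3 * (int j+1) * int t - (int j+1)*(3*int j+1)" using assms by (rule ua_mid)
  have c1: "int (3*j+2-t - 0) = 3 * int j + 2 - int t" "int (3*j+2-t) = 3 * int j + 2 - int t" using assms by auto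
  have "LNa j t = int (3*j+2-t - 0) * ua j t + 2 * (\<Sum>b\<in>{0..<j+1}. ua j b) + 2 * (\<Sum>b\<in>{j+1..<3*j+2-t}. ua j b)"
    using e s1 by (simp add: algebra_simps)
  also have "\<dots> = Da j"
    unfolding l m ut c1 Da_def by (simp add: algebra_simps power2_eq_square)
  finally show ?thesis .
qed

lemma LNa_top: "LNa j (2*j+1) = (2*int j+1)*(int j+1)*(3*int j+2)"
proof -
  have e: "LNa j (2*j+1) = int (j+1 - 0) * ua j (2*j+1) + 2 * (\<Sum>b\<in>{0..<j+1}. ua j b)"
    by (rule LNa_interval) auto
  have l: "2 * (\<Sum>b\<in>{0..<j+1}. ua j b) = (int (j+1) - int 0) * (- 3 * (2*int j+1) * (int 0 + int (j+1) - 1) + 2 * ((2*int j+1)*(3*int j+1)))"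
    by (rule sum_low_a) auto
  have "LNa j (2*j+1) = 2 * (\<Sum>b\<in>{0..<j+1}. ua j b)" using e by (simp add: ua_top)
  also have "\<dots> = (2*int j+1)*(int j+1)*(3*int j+2)" unfolding l by (simp add: algebra_simps)
  finally show ?thesis .
qed

lemma LNa_out: "2*j+1 < t \<Longrightarrow> LNa j t = 0"
  by (simp add: LNa_def)

definition Fa :: "nat \<Rightarrow> nat \<Rightarrow> nat \<Rightarrow> nat \<Rightarrow> real" where
 "Fa j x y z = (if x \<le> 2*j+1 \<and> y \<le> 2*j+1 \<and> z \<le> 2*j+1
     then real_of_int (ua j x + ua j y + ua j z) / real_of_int (Da j) else 0)"

lemma Da_pos: "Da j > 0" by (simp add: Da_def)

lemma Fa_line: "(\<Sum>b\<le>3*j+1-t. Fa j t b (3*j+1-t-b)) = real_of_int (LNa j t) / real_of_int (Da j)"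
  unfolding LNa_def Fa_def of_int_sum sum_divide_distrib
  by (rule sum.cong) auto

lemma Fa_line_val: "(\<Sum>b\<le>3*j+1-t. Fa j t b (3*j+1-t-b)) =
   (if t \<le> 2*j then 1 else if t = 2*j+1 then (2*real j+1)/(3*real j+2) else 0)"
proof -
  have D: "real_of_int (Da j) > 0" using Da_pos by simp
  show ?thesis
  proof (cases "t \<le> 2*j")
    case True
    then have "LNa j t = Da j" using LNa_low LNa_mid by (cases "t \<le> j") auto
    then show ?thesis unfolding Fa_line using True D by simp
  next
    case False
    show ?thesis
    proof (cases "t = 2*j+1")
      case True
      have "real_of_int (LNa j t) / real_of_int (Da j) = (2*real j+1)*(real j+1)*(3*real j+2) / ((real j+1)*(3*real j+2)^2)"
        using True LNa_top[of j] by (simp add: Da_def del: of_nat_Suc)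
      also have "\<dots> = (2*real j+1)/(3*real j+2)"
      proof -
        have "(real j+1)*(3*real j+2)^2 \<noteq> 0" "3 * real j + 2 \<noteq> 0" by (simp, linarith)+
        then show ?thesis by (subst frac_eq_eq) (simp_all add: algebra_simps power2_eq_square)
      qed
      finally show ?thesis unfolding Fa_line using True by simp
    next
      case False
      then show ?thesis unfolding Fa_line using \<open>\<not> t \<le> 2*j\<close> by (simp add: LNa_out)
    qed
  qed
qed

lemma ua_nonneg: "ua j c \<ge> 0"
proof (cases "c \<le> j")
  case True
  have "0 \<le> (2*int j+1)*(3*(int j - int c)+1)" using True by (intro mult_nonneg_nonneg) auto
  with True show ?thesis by (simp add: ua_def)
next
  case False
  show ?thesis
  proof (cases "c \<le> 2*j")
    case True
    have "0 \<le> (int j+1)*(3*(int c - int j) - 1)" using False by (intro mult_nonneg_nonneg) auto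
    with True False show ?thesis by (simp add: ua_def)
  qed (use False in \<open>simp add: ua_def\<close>)
qed

lemma LLM_a: assumes "x \<le> j" "y \<le> j" "j < z" "z \<le> 2*j" "x+y+z = 3*j+1"
  shows "ua j x + ua j y + ua j z = (3*int j+2)*(3*int z-3*int j-1)"
proof -
  have hx: "int x = 3*int j+1 - int z - int y" using assms by simp
  show ?thesis unfolding ua_low[OF assms(1)] ua_low[OF assms(2)] ua_mid[OF assms(3,4)] hx
    by (simp add: algebra_simps)
qed

lemma LLT_a: assumes "x \<le> j" "y \<le> j" "z = 2*j+1" "x+y+z = 3*j+1"
  shows "ua j x + ua j y + ua j z = (2*int j+1)*(3*int j+2)"
proof -
  have hx: "int x = 3*int j+1 - int z - int y" using assms by simp
  have hz: "int z = 2 * int j + 1" using assms by simp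
  have hz0: "ua j z = 0" using assms(3) by (simp add: ua_top)
  show ?thesis unfolding ua_low[OF assms(1)] ua_low[OF assms(2)] hz0 hx hz
    by (simp add: algebra_simps)
qed

lemma LMM_a: assumes "x \<le> j" "j < y" "y \<le> 2*j" "j < z" "z \<le> 2*j" "x+y+z = 3*j+1"
  shows "ua j x + ua j y + ua j z = (3*int j+2)*(3*int j+1-3*int x)"
proof -
  have hy: "int y = 3*int j+1 - int z - int x" using assms by simp
  show ?thesis unfolding ua_low[OF assms(1)] ua_mid[OF assms(2,3)] ua_mid[OF assms(4,5)] hy
    by (simp add: algebra_simps)
qed

lemma pat_bound_a:
  assumes "x \<le> j" "y \<le> j" "x+y+z = 3*j+1" "z \<le> 2*j+1"
  shows "ua j x + ua j y + ua j z \<le> (3*int j+2)^2"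
proof (cases "z = 2*j+1")
  case True
  then have "ua j x + ua j y + ua j z = (2*int j+1)*(3*int j+2)" using LLT_a assms by blast
  also have "\<dots> \<le> (3*int j+2)*(3*int j+2)" by (intro mult_right_mono) auto
  finally show ?thesis by (simp add: power2_eq_square)
next
  case False
  then have z: "j < z" "z \<le> 2*j" using assms by auto
  have "ua j x + ua j y + ua j z = (3*int j+2)*(3*int z-3*int j-1)" using LLM_a assms z by blast
  also have "\<dots> \<le> (3*int j+2)*(3*int j+2)" using z by (intro mult_left_mono) auto
  finally show ?thesis by (simp add: power2_eq_square)
qed

lemma pat_bound_a2:
  assumes "x \<le> j" "j < y" "j < z" "x+y+z = 3*j+1" "y \<le> 2*j+1" "z \<le> 2*j+1"
  shows "ua j x + ua j y + ua j z \<le> (3*int j+2)^2"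
proof -
  have yz: "y \<le> 2*j" "z \<le> 2*j" using assms by auto
  have "ua j x + ua j y + ua j z = (3*int j+2)*(3*int j+1-3*int x)" using LMM_a assms yz by blast
  also have "\<dots> \<le> (3*int j+2)*(3*int j+2)" by (intro mult_left_mono) auto
  finally show ?thesis by (simp add: power2_eq_square)
qed

lemma ua_bound:
  assumes "x \<le> 2*j+1" "y \<le> 2*j+1" "z \<le> 2*j+1" "x+y+z = 3*j+1"
  shows "ua j x + ua j y + ua j z \<le> (3*int j+2)^2"
proof -
  consider "x \<le> j" "y \<le> j" | "x \<le> j" "z \<le> j" | "y \<le> j" "z \<le> j"
    | "x \<le> j" "j < y" "j < z" | "y \<le> j" "j < x" "j < z" | "z \<le> j" "j < x" "j < y"
    using assms by (cases "x \<le> j"; cases "y \<le> j"; cases "z \<le> j") auto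
  then show ?thesis
  proof cases
    case 1 then show ?thesis using pat_bound_a[of x j y z] assms by simp
  next
    case 2 then show ?thesis using pat_bound_a[of x j z y] assms by (simp add: ac_simps)
  next
    case 3 then show ?thesis using pat_bound_a[of y j z x] assms by (simp add: ac_simps)
  next
    case 4 then show ?thesis using pat_bound_a2[of x j y z] assms by simp
  next
    case 5 then show ?thesis using pat_bound_a2[of y j x z] assms by (simp add: ac_simps)
  next
    case 6 then show ?thesis using pat_bound_a2[of z j x y] assms by (simp add: ac_simps)
  qed
qed

lemma Fa_nonneg: "Fa j x y z \<ge> 0"
  using Da_pos[of j] ua_nonneg[of j] by (auto simp: Fa_def intro!: divide_nonneg_pos add_nonneg_nonneg)

lemma Fa_bound: assumes "x+y+z = 3*j+1" shows "Fa j x y z \<le> 1 / (real j + 1)"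
proof (cases "x \<le> 2*j+1 \<and> y \<le> 2*j+1 \<and> z \<le> 2*j+1")
  case True
  have N0: "ua j x + ua j y + ua j z \<le> (3*int j+2)^2"
    using ua_bound[of x j y z] True assms by simp
  have N: "real_of_int (ua j x + ua j y + ua j z) \<le> (3*real j+2)^2"
  proof -
    have "real_of_int (ua j x + ua j y + ua j z) \<le> real_of_int ((3*int j+2)^2)"
      using N0 by (simp only: of_int_le_iff)
    then show ?thesis by simp
  qed
  have D: "real_of_int (Da j) = (real j + 1) * (3*real j+2)^2" by (simp add: Da_def)
  have "Fa j x y z = real_of_int (ua j x + ua j y + ua j z) / ((real j + 1) * (3*real j+2)^2)"
    using True by (simp add: Fa_def D)
  also have "\<dots> \<le> (3*real j+2)^2 / ((real j + 1) * (3*real j+2)^2)"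
    by (rule divide_right_mono[OF N]) simp
  also have "\<dots> = 1 / (real j + 1)"
  proof -
    have "(real j + 1) * (3*real j+2)^2 \<noteq> 0" "real j + 1 \<noteq> 0" by (simp, linarith)+
    then show ?thesis by (subst frac_eq_eq) (simp_all add: algebra_simps)
  qed
  finally show ?thesis .
qed (auto simp: Fa_def)

lemma gapp_image:
  assumes "gapp f A"
  shows "inj_on f A" "gapp id (f ` A)"
proof -
  show "inj_on f A" using assms unfolding gapp_def inj_on_def by force
  show "gapp id (f ` A)" using assms unfolding gapp_def by auto
qed

lemma gapp_subset: "gapp f A \<Longrightarrow> B \<subseteq> A \<Longrightarrow> gapp f B"
  unfolding gapp_def by blast

lemma gauss_real: "(\<Sum>t<m. real (m - t)) = real m * (real m + 1) / 2"
proof (induction m)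
  case 0 then show ?case by simp
next
  case (Suc m)
  have "(\<Sum>t<Suc m. real (Suc m - t)) = (\<Sum>t<m. real (Suc m - t)) + 1" by simp
  also have "(\<Sum>t<m. real (Suc m - t)) = (\<Sum>t<m. real (m - t) + 1)"
    by (rule sum.cong) (auto simp: Suc_diff_le)
  also have "\<dots> = real m * (real m + 1) / 2 + real m" by (simp only: sum.distrib Suc.IH, simp)
  finally show ?case by (simp add: field_simps)
qed

lemma sum_threshold:
  fixes \<alpha> :: real
  assumes "M \<le> S"
  shows "(\<Sum>t\<le>S. (if t < M then 1 else if t = M then \<alpha> else 0)) = real M + \<alpha>"
proof -
  have "(\<Sum>t\<le>S. (if t < M then 1 else if t = M then \<alpha> else 0))
      = (\<Sum>t\<le>S. (if t < M then 1 else 0) + (if t = M then \<alpha> else 0))"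
    by (rule sum.cong) auto
  also have "\<dots> = (\<Sum>t\<le>S. (if t < M then 1 else 0)) + \<alpha>"
    using assms by (simp add: sum.distrib)
  also have "(\<Sum>t\<le>S. (if t < M then 1 else 0::real)) = (\<Sum>t\<in>{..<M}. 1)"
    by (rule sum.mono_neutral_cong_right) (use assms in auto)
  finally show ?thesis by simp
qed

lemma grid_Sigma: "grid (S+1) = Sigma {..S} (\<lambda>t. {..S - t})"
  by (auto simp: grid_def)

lemma sum_grid: "(\<Sum>q\<in>grid (S+1). F (fst q) (snd q)) = (\<Sum>t\<le>S. \<Sum>b\<le>S-t. F t b)"
  unfolding grid_Sigma by (simp add: sum.Sigma split_def)

lemma slant_a:
  assumes A: "A \<subseteq> grid (3*j+2)"
    and f: "f = fst \<or> f = snd \<or> f = (\<lambda>q. 3*j+1 - fst q - snd q)" and g: "gapp f A"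
  shows "(\<Sum>q\<in>A. Fa j (fst q) (snd q) (3*j+1 - fst q - snd q)) \<le> 1"
proof -
  define hex where "hex q \<longleftrightarrow> fst q \<le> 2*j+1 \<and> snd q \<le> 2*j+1 \<and> 3*j+1 - fst q - snd q \<le> 2*j+1" for q :: "nat \<times> nat"
  define A' where "A' = {q\<in>A. hex q}"
  have finA: "finite A" using A finite_grid finite_subset by blast
  have A'A: "A' \<subseteq> A" by (auto simp: A'_def)
  have finA': "finite A'" using finA A'A finite_subset by blast
  have "(\<Sum>q\<in>A. Fa j (fst q) (snd q) (3*j+1 - fst q - snd q)) = (\<Sum>q\<in>A'. Fa j (fst q) (snd q) (3*j+1 - fst q - snd q))"
    by (rule sum.mono_neutral_right[OF finA A'A]) (auto simp: A'_def hex_def Fa_def)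
  also have "\<dots> \<le> real (card A') * (1 / (real j + 1))"
  proof (rule sum_bounded_above)
    fix q assume "q \<in> A'"
    then have "fst q + snd q \<le> 3*j+1" using A by (auto simp: A'_def grid_def)
    then show "Fa j (fst q) (snd q) (3*j+1 - fst q - snd q) \<le> 1 / (real j + 1)"
      by (intro Fa_bound) simp
  qed
  also have "\<dots> \<le> 1"
  proof -
    have g': "gapp f A'" using gapp_subset[OF g A'A] .
    have sub: "f ` A' \<subseteq> {..2*j+1}" using f by (auto simp: A'_def hex_def)
    have "card A' = card (f ` A')" using card_image[OF gapp_image(1)[OF g']] by simp
    also have "\<dots> \<le> (2*j+1) div 2 + 1"
      by (rule gap_card(1)[OF finite_imageI[OF finA'] sub gapp_image(2)[OF g']])
    finally have "card A' \<le> j + 1" by simp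
    then have "real (card A') \<le> real j + 1" by linarith
    then show ?thesis by (simp add: field_simps)
  qed
  finally show ?thesis .
qed

lemma total_a: "(\<Sum>q\<in>grid (3*j+2). Fa j (fst q) (snd q) (3*j+1 - fst q - snd q)) = real (2*j+1) + real (2*j+1) / real (3*j+2)"
proof -
  have "(\<Sum>q\<in>grid (3*j+2). Fa j (fst q) (snd q) (3*j+1 - fst q - snd q))
      = (\<Sum>t\<le>3*j+1. \<Sum>b\<le>3*j+1-t. Fa j t b (3*j+1 - t - b))"
    using sum_grid[where S="3*j+1" and F="\<lambda>a b. Fa j a b (3*j+1 - a - b)"] by simp
  also have "\<dots> = (\<Sum>t\<le>3*j+1. (if t < 2*j+1 then 1 else if t = 2*j+1 then (2*real j+1)/(3*real j+2) else 0))"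
  proof (rule sum.cong[OF refl])
    fix t show "(\<Sum>b\<le>3*j+1-t. Fa j t b (3*j+1 - t - b)) = (if t < 2*j+1 then 1 else if t = 2*j+1 then (2*real j+1)/(3*real j+2) else 0)"
      unfolding Fa_line_val by auto
  qed
  also have "\<dots> = real (2*j+1) + (2*real j+1)/(3*real j+2)" by (rule sum_threshold) simp
  also have "(2*real j+1)/(3*real j+2) = real (2*j+1) / real (3*j+2)" by (simp add: add.commute)
  finally show ?thesis .
qed

lemma cover_a:
  fixes j a b :: nat
  defines "G \<equiv> (\<lambda>t. if t < 2*j+1 then real (2*j+1 - t) / real (3*j+2) else 0)"
  assumes ab: "a + b \<le> 3*j+1"
  shows "G a + G b + G (3*j+1 - a - b) \<ge> 1"
proof -
  define c where "c = 3*j+1 - a - b"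
  have abc: "a + b + c = 3*j+1" using ab by (simp add: c_def)
  define H where "H t = (if t < 2*j+1 then real (2*j+1) - real t else 0)" for t
  have GH: "G t = H t / real (3*j+2)" for t by (simp add: G_def H_def of_nat_diff)
  have "real (3*j+2) \<le> H a + H b + H c"
    using abc unfolding H_def by (auto split: if_splits)
  then have "1 \<le> (H a + H b + H c) / real (3*j+2)" by (simp add: field_simps)
  then show ?thesis by (simp add: GH c_def add_divide_distrib)
qed

theorem case_a: "fstar (3*j+2) 2 = real (2*j+1) + real (2*j+1) / real (3*j+2)"
proof -
  define V where "V = real (2*j+1) + real (2*j+1) / real (3*j+2)"
  define G where "G = (\<lambda>t. if t < 2*j+1 then real (2*j+1 - t) / real (3*j+2) else 0)"
  obtain w0 where w0: "frac_cover 2 (3*j+2) w0" "total_weight w0 = 3 * (\<Sum>t<2*j+1. G t)"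
  proof -
    have "\<exists>w. frac_cover 2 (3*j+2) w \<and> total_weight w = 3 * (\<Sum>t<2*j+1. G t)"
    proof (rule upper_bound[where S = "3*j+1"])
      show "\<And>t. t < 2*j+1 \<Longrightarrow> G t > 0" by (simp add: G_def)
      show "\<And>t. 2*j+1 \<le> t \<Longrightarrow> G t = 0" by (simp add: G_def)
      show "\<And>a b. a + b \<le> 3*j+1 \<Longrightarrow> G a + G b + G (3*j+1 - a - b) \<ge> 1"
        unfolding G_def by (rule cover_a)
    qed auto
    then show ?thesis using that by blast
  qed
  have tw0: "total_weight w0 = V"
  proof -
    have "(\<Sum>t<2*j+1. G t) = (\<Sum>t<2*j+1. real (2*j+1 - t)) / real (3*j+2)"
      unfolding G_def sum_divide_distrib by (rule sum.cong) auto
    also have "\<dots> = real (2*j+1) * (real (2*j+1) + 1) / 2 / real (3*j+2)" by (simp only: gauss_real)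
    finally have "total_weight w0 = 3 * (real (2*j+1) * (real (2*j+1) + 1) / 2 / real (3*j+2))"
      using w0(2) by simp
    also have "\<dots> = V" unfolding V_def by (simp add: field_simps)
    finally show ?thesis .
  qed
  have lb: "V \<le> total_weight w" if "frac_cover 2 (3*j+2) w" for w
  proof -
    have "(\<Sum>q\<in>grid (3*j+2). Fa j (fst q) (snd q) (3*j+1 - fst q - snd q)) \<le> total_weight w"
    proof (rule lower_bound_pairs[OF _ _ _ that])
      show "1 \<le> 3*j+2" by simp
      show "\<And>q. 0 \<le> Fa j (fst q) (snd q) (3*j+1 - fst q - snd q)" by (rule Fa_nonneg)
      fix c0 c1 \<beta> :: real assume c: "c0 \<noteq> 0 \<or> c1 \<noteq> 0"
      show "(\<Sum>q\<in>{q\<in>grid (3*j+2). c0 * real (fst q) + c1 * real (snd q) = \<beta>}.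
              Fa j (fst q) (snd q) (3*j+1 - fst q - snd q)) \<le> 1"
      proof (rule line_bound[OF _ _ _ _ _ c])
        show "3*j+1 + 1 = 3*j+2" by simp
        show "\<And>x y z. Fa j x y z = Fa j y x z" by (auto simp: Fa_def ac_simps)
        show "\<And>x y z. Fa j x y z = Fa j x z y" by (auto simp: Fa_def ac_simps)
        show "\<And>t. t \<le> 3*j+1 \<Longrightarrow> (\<Sum>b\<le>3*j+1-t. Fa j t b (3*j+1-t-b)) \<le> 1"
          unfolding Fa_line_val by auto
        show "\<And>A f. A \<subseteq> grid (3*j+2) \<Longrightarrow> f = fst \<or> f = snd \<or> f = (\<lambda>q. 3*j+1 - fst q - snd q) \<Longrightarrow> gapp f A
           \<Longrightarrow> (\<Sum>q\<in>A. Fa j (fst q) (snd q) (3*j+1 - fst q - snd q)) \<le> 1"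
          by (rule slant_a)
      qed
    qed
    then show ?thesis using total_a[of j] by (simp add: V_def)
  qed
  have "Inf (total_weight ` {w. frac_cover 2 (3*j+2) w}) = V"
  proof (rule cInf_eq_minimum)
    show "V \<in> total_weight ` {w. frac_cover 2 (3*j+2) w}"
      by (rule image_eqI[of _ _ w0]) (use w0 tw0 in auto)
    show "\<And>x. x \<in> total_weight ` {w. frac_cover 2 (3*j+2) w} \<Longrightarrow> V \<le> x" using lb by auto
  qed
  then show ?thesis by (simp add: fstar_def V_def)
qed

definition ub :: "nat \<Rightarrow> nat \<Rightarrow> int" where
 "ub j c = (if c \<le> j then (int j+1)*(3*(int j - int c)+2)
            else if c \<le> 2*j+1 then (2*int j+3)*(3*(int c - int j) - 2) else 0)"

definition Db :: "nat \<Rightarrow> int" where "Db j = (int j + 1) * (3*int j+4)^2"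

definition LNb :: "nat \<Rightarrow> nat \<Rightarrow> int" where
 "LNb j t = (\<Sum>b\<le>3*j+2-t. if t \<le> 2*j+2 \<and> b \<le> 2*j+2 \<and> 3*j+2-t-b \<le> 2*j+2
     then ub j t + ub j b + ub j (3*j+2-t-b) else 0)"

lemma ub_low: "c \<le> j \<Longrightarrow> ub j c = - 3 * (int j+1) * int c + (int j+1)*(3*int j+2)"
  by (simp add: ub_def algebra_simps)
lemma ub_mid: "j < c \<Longrightarrow> c \<le> 2*j+1 \<Longrightarrow> ub j c = 3 * (2*int j+3) * int c - (2*int j+3)*(3*int j+2)"
  by (simp add: ub_def algebra_simps)
lemma ub_top: "2*j+1 < c \<Longrightarrow> ub j c = 0"
  by (simp add: ub_def)

lemma sum_low_b: "2 * (\<Sum>c\<in>{p..<q}. ub j c) = (int q - int p) * (- 3 * (int j+1) * (int p + int q - 1) + 2 * ((int j+1)*(3*int j+2)))"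
  if "p \<le> q" "q \<le> j + 1"
proof -
  have "(\<Sum>c\<in>{p..<q}. ub j c) = (\<Sum>c\<in>{p..<q}. (- 3 * (int j+1)) * int c + (int j+1)*(3*int j+2))"
    using that by (intro sum.cong) (auto simp: ub_low)
  then show ?thesis using aser2[OF that(1)] by simp
qed

lemma sum_mid_b: "2 * (\<Sum>c\<in>{p..<q}. ub j c) = (int q - int p) * (3 * (2*int j+3) * (int p + int q - 1) + 2 * (- (2*int j+3)*(3*int j+2)))"
  if "j < p" "p \<le> q" "q \<le> 2*j + 2"
proof -
  have "(\<Sum>c\<in>{p..<q}. ub j c) = (\<Sum>c\<in>{p..<q}. (3 * (2*int j+3)) * int c + (- (2*int j+3)*(3*int j+2)))"
    using that by (intro sum.cong) (auto simp: ub_mid algebra_simps)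
  then show ?thesis using aser2[OF that(2)] by simp
qed

lemma LNb_interval:
  assumes "{b. b \<le> 3*j+2-t \<and> (t \<le> 2*j+2 \<and> b \<le> 2*j+2 \<and> 3*j+2-t-b \<le> 2*j+2)} = {lo..<hi}"
    and "3*j+2-t + 1 = lo + hi" "lo < hi"
  shows "LNb j t = int (hi - lo) * ub j t + 2 * (\<Sum>b\<in>{lo..<hi}. ub j b)"
proof -
  have "LNb j t = (\<Sum>b\<in>{b\<in>{..3*j+2-t}. t \<le> 2*j+2 \<and> b \<le> 2*j+2 \<and> 3*j+2-t-b \<le> 2*j+2}.
       ub j t + ub j b + ub j (3*j+2-t-b))"
    unfolding LNb_def by (rule sum.inter_filter[symmetric]) simp
  also have "{b\<in>{..3*j+2-t}. t \<le> 2*j+2 \<and> b \<le> 2*j+2 \<and> 3*j+2-t-b \<le> 2*j+2} = {lo..<hi}"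
    using assms(1) by auto
  also have "(\<Sum>b\<in>{lo..<hi}. ub j t + ub j b + ub j (3*j+2-t-b))
      = int (hi - lo) * ub j t + (\<Sum>b\<in>{lo..<hi}. ub j b) + (\<Sum>b\<in>{lo..<hi}. ub j (3*j+2-t-b))"
    by (simp add: sum.distrib)
  also have "(\<Sum>b\<in>{lo..<hi}. ub j (3*j+2-t-b)) = (\<Sum>b\<in>{lo..<hi}. ub j b)"
    using refl_sum[of "3*j+2-t" lo hi "ub j"] assms(2,3) by simp
  finally show ?thesis by simp
qed

lemma LNb_low: assumes "t \<le> j" shows "LNb j t = Db j"
proof -
  have e: "LNb j t = int (2*j+3 - (j - t)) * ub j t + 2 * (\<Sum>b\<in>{j-t..<2*j+3}. ub j b)"
    by (rule LNb_interval) (use assms in auto)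
  have s1: "(\<Sum>b\<in>{j-t..<2*j+3}. ub j b) = (\<Sum>b\<in>{j-t..<j+1}. ub j b) + (\<Sum>b\<in>{j+1..<2*j+3}. ub j b)"
    by (rule sum.atLeastLessThan_concat[symmetric]) auto
  have s2: "(\<Sum>b\<in>{j+1..<2*j+3}. ub j b) = (\<Sum>b\<in>{j+1..<2*j+2}. ub j b) + (\<Sum>b\<in>{2*j+2..<2*j+3}. ub j b)"
    by (rule sum.atLeastLessThan_concat[symmetric]) auto
  have l: "2 * (\<Sum>b\<in>{j-t..<j+1}. ub j b) = (int (j+1) - int (j-t)) * (- 3 * (int j+1) * (int (j-t) + int (j+1) - 1) + 2 * ((int j+1)*(3*int j+2)))"
    by (rule sum_low_b) auto
  have m: "2 * (\<Sum>b\<in>{j+1..<2*j+2}. ub j b) = (int (2*j+2) - int (j+1)) * (3 * (2*int j+3) * (int (j+1) + int (2*j+2) - 1) + 2 * (- (2*int j+3)*(3*int j+2)))"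
    by (rule sum_mid_b) auto
  have tp: "(\<Sum>b\<in>{2*j+2..<2*j+3}. ub j b) = 0" by (simp add: ub_top)
  have ut: "ub j t = - 3 * (int j+1) * int t + (int j+1)*(3*int j+2)" using assms by (rule ub_low)
  have c1: "int (2*j+3 - (j - t)) = int j + 3 + int t" "int (j - t) = int j - int t" using assms by auto
  have "LNb j t = int (2*j+3 - (j - t)) * ub j t + 2 * (\<Sum>b\<in>{j-t..<j+1}. ub j b) + 2 * (\<Sum>b\<in>{j+1..<2*j+2}. ub j b)"
    using e s1 s2 tp by (simp add: algebra_simps)
  also have "\<dots> = Db j"
    unfolding l m ut c1 Db_def by (simp add: algebra_simps power2_eq_square)
  finally show ?thesis .
qed

lemma LNb_mid: assumes "j < t" "t \<le> 2*j+1" shows "LNb j t = Db j"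
proof -
  have e: "LNb j t = int (3*j+3-t - 0) * ub j t + 2 * (\<Sum>b\<in>{0..<3*j+3-t}. ub j b)"
    by (rule LNb_interval) (use assms in auto)
  have s1: "(\<Sum>b\<in>{0..<3*j+3-t}. ub j b) = (\<Sum>b\<in>{0..<j+1}. ub j b) + (\<Sum>b\<in>{j+1..<3*j+3-t}. ub j b)"
    by (rule sum.atLeastLessThan_concat[symmetric]) (use assms in auto)
  have l: "2 * (\<Sum>b\<in>{0..<j+1}. ub j b) = (int (j+1) - int 0) * (- 3 * (int j+1) * (int 0 + int (j+1) - 1) + 2 * ((int j+1)*(3*int j+2)))"
    by (rule sum_low_b) auto
  have m: "2 * (\<Sum>b\<in>{j+1..<3*j+3-t}. ub j b) = (int (3*j+3-t) - int (j+1)) * (3 * (2*int j+3) * (int (j+1) + int (3*j+3-t) - 1) + 2 * (- (2*int j+3)*(3*int j+2)))"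
    by (rule sum_mid_b) (use assms in auto)
  have ut: "ub j t = 3 * (2*int j+3) * int t - (2*int j+3)*(3*int j+2)" using assms by (rule ub_mid)
  have c1: "int (3*j+3-t - 0) = 3 * int j + 3 - int t" "int (3*j+3-t) = 3 * int j + 3 - int t" using assms by auto
  have "LNb j t = int (3*j+3-t - 0) * ub j t + 2 * (\<Sum>b\<in>{0..<j+1}. ub j b) + 2 * (\<Sum>b\<in>{j+1..<3*j+3-t}. ub j b)"
    using e s1 by (simp add: algebra_simps)
  also have "\<dots> = Db j"
    unfolding l m ut c1 Db_def by (simp add: algebra_simps power2_eq_square)
  finally show ?thesis .
qed

lemma LNb_top: "LNb j (2*j+2) = (int j+1)*(int j+1)*(3*int j+4)"
proof -
  have e: "LNb j (2*j+2) = int (j+1 - 0) * ub j (2*j+2) + 2 * (\<Sum>b\<in>{0..<j+1}. ub j b)"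
    by (rule LNb_interval) auto
  have l: "2 * (\<Sum>b\<in>{0..<j+1}. ub j b) = (int (j+1) - int 0) * (- 3 * (int j+1) * (int 0 + int (j+1) - 1) + 2 * ((int j+1)*(3*int j+2)))"
    by (rule sum_low_b) auto
  have "LNb j (2*j+2) = 2 * (\<Sum>b\<in>{0..<j+1}. ub j b)" using e by (simp add: ub_top)
  also have "\<dots> = (int j+1)*(int j+1)*(3*int j+4)" unfolding l by (simp add: algebra_simps)
  finally show ?thesis .
qed

lemma LNb_out: "2*j+2 < t \<Longrightarrow> LNb j t = 0"
  by (simp add: LNb_def)

definition Fb :: "nat \<Rightarrow> nat \<Rightarrow> nat \<Rightarrow> nat \<Rightarrow> real" where
 "Fb j x y z = (if x \<le> 2*j+2 \<and> y \<le> 2*j+2 \<and> z \<le> 2*j+2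
     then real_of_int (ub j x + ub j y + ub j z) / real_of_int (Db j) else 0)"

lemma Db_pos: "Db j > 0" by (simp add: Db_def)

lemma Fb_line: "(\<Sum>b\<le>3*j+2-t. Fb j t b (3*j+2-t-b)) = real_of_int (LNb j t) / real_of_int (Db j)"
  unfolding LNb_def Fb_def of_int_sum sum_divide_distrib
  by (rule sum.cong) auto

lemma Fb_line_val: "(\<Sum>b\<le>3*j+2-t. Fb j t b (3*j+2-t-b)) =
   (if t \<le> 2*j+1 then 1 else if t = 2*j+2 then (real j+1)/(3*real j+4) else 0)"
proof -
  have D: "real_of_int (Db j) > 0" using Db_pos by simp
  show ?thesis
  proof (cases "t \<le> 2*j+1")
    case True
    then have "LNb j t = Db j" using LNb_low LNb_mid by (cases "t \<le> j") auto
    then show ?thesis unfolding Fb_line using True D by simp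
  next
    case False
    show ?thesis
    proof (cases "t = 2*j+2")
      case True
      have "real_of_int (LNb j t) / real_of_int (Db j) = (real j+1)*(real j+1)*(3*real j+4) / ((real j+1)*(3*real j+4)^2)"
        using True LNb_top[of j] by (simp add: Db_def del: of_nat_Suc)
      also have "\<dots> = (real j+1)/(3*real j+4)"
      proof -
        have "(real j+1)*(3*real j+4)^2 \<noteq> 0" "3 * real j + 4 \<noteq> 0" by (simp, linarith)+
        then show ?thesis by (subst frac_eq_eq) (simp_all add: algebra_simps power2_eq_square)
      qed
      finally show ?thesis unfolding Fb_line using True by simp
    next
      case False
      then show ?thesis unfolding Fb_line using \<open>\<not> t \<le> 2*j+1\<close> by (simp add: LNb_out)
    qed
  qed
qed

lemma ub_nonneg: "ub j c \<ge> 0"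
proof (cases "c \<le> j")
  case True
  have "0 \<le> (int j+1)*(3*(int j - int c)+2)" using True by (intro mult_nonneg_nonneg) auto
  with True show ?thesis by (simp add: ub_def)
next
  case False
  show ?thesis
  proof (cases "c \<le> 2*j+1")
    case True
    have "0 \<le> (2*int j+3)*(3*(int c - int j) - 2)" using False by (intro mult_nonneg_nonneg) auto
    with True False show ?thesis by (simp add: ub_def)
  qed (use False in \<open>simp add: ub_def\<close>)
qed

lemma LLM_b: assumes "x \<le> j" "y \<le> j" "j < z" "z \<le> 2*j+1" "x+y+z = 3*j+2"
  shows "ub j x + ub j y + ub j z = (3*int j+4)*(3*int z-3*int j-2)"
proof -
  have hx: "int x = 3*int j+2 - int z - int y" using assms by simp
  show ?thesis unfolding ub_low[OF assms(1)] ub_low[OF assms(2)] ub_mid[OF assms(3,4)] hx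
    by (simp add: algebra_simps)
qed

lemma LLT_b: assumes "x \<le> j" "y \<le> j" "z = 2*j+2" "x+y+z = 3*j+2"
  shows "ub j x + ub j y + ub j z = (int j+1)*(3*int j+4)"
proof -
  have hx: "int x = 3*int j+2 - int z - int y" using assms by simp
  have hz: "int z = 2 * int j + 2" using assms by simp
  have hz0: "ub j z = 0" using assms(3) by (simp add: ub_top)
  show ?thesis unfolding ub_low[OF assms(1)] ub_low[OF assms(2)] hz0 hx hz
    by (simp add: algebra_simps)
qed

lemma LMM_b: assumes "x \<le> j" "j < y" "y \<le> 2*j+1" "j < z" "z \<le> 2*j+1" "x+y+z = 3*j+2"
  shows "ub j x + ub j y + ub j z = (3*int j+4)*(3*int j+2-3*int x)"
proof -
  have hy: "int y = 3*int j+2 - int z - int x" using assms by simp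
  show ?thesis unfolding ub_low[OF assms(1)] ub_mid[OF assms(2,3)] ub_mid[OF assms(4,5)] hy
    by (simp add: algebra_simps)
qed

lemma pat_bound_b:
  assumes "x \<le> j" "y \<le> j" "x+y+z = 3*j+2" "z \<le> 2*j+2"
  shows "ub j x + ub j y + ub j z \<le> 3*(int j+1)*(3*int j+4)"
proof (cases "z = 2*j+2")
  case True
  then have "ub j x + ub j y + ub j z = (int j+1)*(3*int j+4)" using LLT_b assms by blast
  also have "\<dots> \<le> 3*(int j+1)*(3*int j+4)" by simp
  finally show ?thesis .
next
  case False
  then have z: "j < z" "z \<le> 2*j+1" using assms by auto
  have "ub j x + ub j y + ub j z = (3*int j+4)*(3*int z-3*int j-2)" using LLM_b assms z by blast
  also have "\<dots> \<le> (3*int j+4)*(3*int j+3)" using z by (intro mult_left_mono) auto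
  finally show ?thesis by (simp add: algebra_simps)
qed

lemma pat_bound_b2:
  assumes "x \<le> j" "j < y" "j < z" "x+y+z = 3*j+2" "y \<le> 2*j+2" "z \<le> 2*j+2"
  shows "ub j x + ub j y + ub j z \<le> 3*(int j+1)*(3*int j+4)"
proof -
  have yz: "y \<le> 2*j+1" "z \<le> 2*j+1" using assms by auto
  have "ub j x + ub j y + ub j z = (3*int j+4)*(3*int j+2-3*int x)" using LMM_b assms yz by blast
  also have "\<dots> \<le> (3*int j+4)*(3*int j+3)" by (intro mult_left_mono) auto
  finally show ?thesis by (simp add: algebra_simps)
qed

lemma ub_bound:
  assumes "x \<le> 2*j+2" "y \<le> 2*j+2" "z \<le> 2*j+2" "x+y+z = 3*j+2"
  shows "ub j x + ub j y + ub j z \<le> 3*(int j+1)*(3*int j+4)"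
proof -
  consider "x \<le> j" "y \<le> j" | "x \<le> j" "z \<le> j" | "y \<le> j" "z \<le> j"
    | "x \<le> j" "j < y" "j < z" | "y \<le> j" "j < x" "j < z" | "z \<le> j" "j < x" "j < y"
    using assms by (cases "x \<le> j"; cases "y \<le> j"; cases "z \<le> j") auto
  then show ?thesis
  proof cases
    case 1 then show ?thesis using pat_bound_b[of x j y z] assms by simp
  next
    case 2 then show ?thesis using pat_bound_b[of x j z y] assms by (simp add: ac_simps)
  next
    case 3 then show ?thesis using pat_bound_b[of y j z x] assms by (simp add: ac_simps)
  next
    case 4 then show ?thesis using pat_bound_b2[of x j y z] assms by simp
  next
    case 5 then show ?thesis using pat_bound_b2[of y j x z] assms by (simp add: ac_simps)
  next
    case 6 then show ?thesis using pat_bound_b2[of z j x y] assms by (simp add: ac_simps)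
  qed
qed

lemma ub_top_val:
  assumes "x \<le> 2*j+2" "y \<le> 2*j+2" "z \<le> 2*j+2" "x+y+z = 3*j+2" "x = 2*j+2 \<or> y = 2*j+2 \<or> z = 2*j+2"
  shows "ub j x + ub j y + ub j z = (int j+1)*(3*int j+4)"
  using assms(5)
proof (elim disjE)
  assume "x = 2*j+2" then show ?thesis using LLT_b[of y j z x] assms by (simp add: ac_simps)
next
  assume "y = 2*j+2" then show ?thesis using LLT_b[of x j z y] assms by (simp add: ac_simps)
next
  assume "z = 2*j+2" then show ?thesis using LLT_b[of x j y z] assms by (simp add: ac_simps)
qed

lemma Fb_nonneg: "Fb j x y z \<ge> 0"
  using Db_pos[of j] ub_nonneg[of j] by (auto simp: Fb_def intro!: divide_nonneg_pos add_nonneg_nonneg)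

lemma Fb_bound: assumes "x+y+z = 3*j+2" shows "Fb j x y z \<le> 3 / (3*real j + 4)"
proof (cases "x \<le> 2*j+2 \<and> y \<le> 2*j+2 \<and> z \<le> 2*j+2")
  case True
  have N0: "ub j x + ub j y + ub j z \<le> 3*(int j+1)*(3*int j+4)"
    using ub_bound[of x j y z] True assms by simp
  have N: "real_of_int (ub j x + ub j y + ub j z) \<le> 3*(real j+1)*(3*real j+4)"
  proof -
    have "real_of_int (ub j x + ub j y + ub j z) \<le> real_of_int (3*(int j+1)*(3*int j+4))"
      using N0 by (simp only: of_int_le_iff)
    then show ?thesis by simp
  qed
  have D: "real_of_int (Db j) = (real j + 1) * (3*real j+4)^2" by (simp add: Db_def)
  have "Fb j x y z = real_of_int (ub j x + ub j y + ub j z) / ((real j + 1) * (3*real j+4)^2)"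
    using True by (simp add: Fb_def D)
  also have "\<dots> \<le> 3*(real j+1)*(3*real j+4) / ((real j + 1) * (3*real j+4)^2)"
    by (rule divide_right_mono[OF N]) simp
  also have "\<dots> = 3 / (3*real j + 4)"
  proof -
    have "(real j + 1) * (3*real j+4)^2 \<noteq> 0" "3*real j + 4 \<noteq> 0" by (simp, linarith)+
    then show ?thesis by (subst frac_eq_eq) (simp_all add: algebra_simps power2_eq_square)
  qed
  finally show ?thesis .
qed (auto simp: Fb_def)

lemma Fb_top: assumes "x+y+z = 3*j+2" "x \<le> 2*j+2" "y \<le> 2*j+2" "z \<le> 2*j+2"
    "x = 2*j+2 \<or> y = 2*j+2 \<or> z = 2*j+2"
  shows "Fb j x y z = 1 / (3*real j + 4)"
proof -
  have N0: "ub j x + ub j y + ub j z = (int j+1)*(3*int j+4)" using ub_top_val assms by blast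
  have N: "real_of_int (ub j x + ub j y + ub j z) = (real j+1)*(3*real j+4)"
  proof -
    have "real_of_int (ub j x + ub j y + ub j z) = real_of_int ((int j+1)*(3*int j+4))"
      using N0 by (simp only:)
    then show ?thesis by simp
  qed
  have D: "real_of_int (Db j) = (real j + 1) * (3*real j+4)^2" by (simp add: Db_def)
  have "Fb j x y z = real_of_int (ub j x + ub j y + ub j z) / ((real j + 1) * (3*real j+4)^2)"
    using assms by (simp add: Fb_def D)
  also have "\<dots> = (real j+1)*(3*real j+4) / ((real j + 1) * (3*real j+4)^2)"
    unfolding N ..
  also have "\<dots> = 1 / (3*real j + 4)"
  proof -
    have "(real j + 1) * (3*real j+4)^2 \<noteq> 0" "3*real j + 4 \<noteq> 0" by (simp, linarith)+
    then show ?thesis by (subst frac_eq_eq) (simp_all add: algebra_simps power2_eq_square)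
  qed
  finally show ?thesis .
qed

lemma slant_b:
  assumes A: "A \<subseteq> grid (3*j+3)"
    and f: "f = fst \<or> f = snd \<or> f = (\<lambda>q. 3*j+2 - fst q - snd q)" and g: "gapp f A"
  shows "(\<Sum>q\<in>A. Fb j (fst q) (snd q) (3*j+2 - fst q - snd q)) \<le> 1"
proof -
  define Y where "Y q = Fb j (fst q) (snd q) (3*j+2 - fst q - snd q)" for q
  define hex where "hex q \<longleftrightarrow> fst q \<le> 2*j+2 \<and> snd q \<le> 2*j+2 \<and> 3*j+2 - fst q - snd q \<le> 2*j+2" for q :: "nat \<times> nat"
  define A' where "A' = {q\<in>A. hex q}"
  have finA: "finite A" using A finite_grid finite_subset by blast
  have A'A: "A' \<subseteq> A" by (auto simp: A'_def)
  have finA': "finite A'" using finA A'A finite_subset by blast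
  have sumS: "fst q + snd q + (3*j+2 - fst q - snd q) = 3*j+2" if "q \<in> A'" for q
    using that A by (auto simp: A'_def grid_def)
  have Ybd: "Y q \<le> 3 / (3*real j + 4)" if "q \<in> A'" for q
    unfolding Y_def by (rule Fb_bound[OF sumS[OF that]])
  have "sum Y A = sum Y A'"
    by (rule sum.mono_neutral_right[OF finA A'A]) (auto simp: A'_def hex_def Fb_def Y_def)
  also have "sum Y A' \<le> 1"
  proof -
    have g': "gapp f A'" using gapp_subset[OF g A'A] .
    have sub: "f ` A' \<subseteq> {..2*j+2}" using f by (auto simp: A'_def hex_def)
    have cA: "card A' = card (f ` A')" using card_image[OF gapp_image(1)[OF g']] by simp
    have gc: "card (f ` A') \<le> (2*j+2) div 2 + 1"
      by (rule gap_card(1)[OF finite_imageI[OF finA'] sub gapp_image(2)[OF g']])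
    have pos: "3*real j + 4 > 0" by simp
    show ?thesis
    proof (cases "card A' \<le> j + 1")
      case True
      have "sum Y A' \<le> real (card A') * (3 / (3*real j + 4))"
        by (rule sum_bounded_above) (rule Ybd)
      also have "\<dots> \<le> (real j + 1) * (3 / (3*real j + 4))"
        using True by (intro mult_right_mono) auto
      also have "\<dots> \<le> 1" using pos by (simp add: field_simps)
      finally show ?thesis .
    next
      case False
      then have ce: "card (f ` A') = (2*j+2) div 2 + 1" using cA gc by simp
      have "2*j+2 \<in> f ` A'"
        by (rule gap_card(2)[OF finite_imageI[OF finA'] sub gapp_image(2)[OF g'] ce]) simp
      then obtain q0 where q0: "q0 \<in> A'" "f q0 = 2*j+2" by auto
      have hq0: "hex q0" using q0 by (simp add: A'_def)
      have Yq0: "Y q0 = 1 / (3*real j + 4)"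
        unfolding Y_def
      proof (rule Fb_top[OF sumS[OF q0(1)]])
        show "fst q0 \<le> 2*j+2" "snd q0 \<le> 2*j+2" "3*j+2 - fst q0 - snd q0 \<le> 2*j+2"
          using hq0 by (auto simp: hex_def)
        show "fst q0 = 2*j+2 \<or> snd q0 = 2*j+2 \<or> 3*j+2 - fst q0 - snd q0 = 2*j+2"
          using f q0(2) by auto
      qed
      have cr: "card (A' - {q0}) = j + 1" using False cA gc q0(1) finA' by simp
      have "sum Y A' = Y q0 + sum Y (A' - {q0})" using sum.remove[OF finA' q0(1)] .
      also have "sum Y (A' - {q0}) \<le> real (card (A' - {q0})) * (3 / (3*real j + 4))"
        by (rule sum_bounded_above) (rule Ybd, simp)
      finally have "sum Y A' \<le> 1 / (3*real j + 4) + (real j + 1) * (3 / (3*real j + 4))"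
        using Yq0 cr by (simp add: algebra_simps)
      also have "\<dots> = 1" using pos by (simp add: field_simps)
      finally show ?thesis .
    qed
  qed
  finally show ?thesis by (simp add: Y_def)
qed

lemma total_b: "(\<Sum>q\<in>grid (3*j+3). Fb j (fst q) (snd q) (3*j+2 - fst q - snd q)) = real (2*j+2) + real (j+1) / real (3*j+4)"
proof -
  have "(\<Sum>q\<in>grid (3*j+3). Fb j (fst q) (snd q) (3*j+2 - fst q - snd q))
      = (\<Sum>t\<le>3*j+2. \<Sum>b\<le>3*j+2-t. Fb j t b (3*j+2 - t - b))"
  proof -
    have e: "3*j+3 = (3*j+2)+1" by simp
    show ?thesis unfolding e by (rule sum_grid)
  qed
  also have "\<dots> = (\<Sum>t\<le>3*j+2. (if t < 2*j+2 then 1 else if t = 2*j+2 then (real j+1)/(3*real j+4) else 0))"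
  proof (rule sum.cong[OF refl])
    fix t show "(\<Sum>b\<le>3*j+2-t. Fb j t b (3*j+2 - t - b)) = (if t < 2*j+2 then 1 else if t = 2*j+2 then (real j+1)/(3*real j+4) else 0)"
      unfolding Fb_line_val by auto
  qed
  also have "\<dots> = real (2*j+2) + (real j+1)/(3*real j+4)" by (rule sum_threshold) simp
  also have "(real j+1)/(3*real j+4) = real (j+1) / real (3*j+4)" by (simp add: add.commute)
  finally show ?thesis .
qed

lemma cover_b:
  fixes j a b :: nat
  defines "G \<equiv> (\<lambda>t. if t < 2*j+2 then real (2*j+2 - t) / real (3*j+4) else 0)"
  assumes ab: "a + b \<le> 3*j+2"
  shows "G a + G b + G (3*j+2 - a - b) \<ge> 1"
proof -
  define c where "c = 3*j+2 - a - b"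
  have abc: "a + b + c = 3*j+2" using ab by (simp add: c_def)
  define H where "H t = (if t < 2*j+2 then real (2*j+2) - real t else 0)" for t
  have GH: "G t = H t / real (3*j+4)" for t by (simp add: G_def H_def of_nat_diff)
  have "real (3*j+4) \<le> H a + H b + H c"
    using abc unfolding H_def by (auto split: if_splits)
  then have "1 \<le> (H a + H b + H c) / real (3*j+4)" by (simp add: field_simps)
  then show ?thesis by (simp add: GH c_def add_divide_distrib)
qed

theorem case_b: "fstar (3*j+3) 2 = real (2*j+2) + real (j+1) / real (3*j+4)"
proof -
  define V where "V = real (2*j+2) + real (j+1) / real (3*j+4)"
  define G where "G = (\<lambda>t. if t < 2*j+2 then real (2*j+2 - t) / real (3*j+4) else 0)"
  obtain w0 where w0: "frac_cover 2 (3*j+3) w0" "total_weight w0 = 3 * (\<Sum>t<2*j+2. G t)"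
  proof -
    have "\<exists>w. frac_cover 2 (3*j+3) w \<and> total_weight w = 3 * (\<Sum>t<2*j+2. G t)"
    proof (rule upper_bound[where S = "3*j+2"])
      show "\<And>t. t < 2*j+2 \<Longrightarrow> G t > 0" by (simp add: G_def)
      show "\<And>t. 2*j+2 \<le> t \<Longrightarrow> G t = 0" by (simp add: G_def)
      show "\<And>a b. a + b \<le> 3*j+2 \<Longrightarrow> G a + G b + G (3*j+2 - a - b) \<ge> 1"
        unfolding G_def by (rule cover_b)
    qed auto
    then show ?thesis using that by blast
  qed
  have tw0: "total_weight w0 = V"
  proof -
    have "(\<Sum>t<2*j+2. G t) = (\<Sum>t<2*j+2. real (2*j+2 - t)) / real (3*j+4)"
      unfolding G_def sum_divide_distrib by (rule sum.cong) auto
    also have "\<dots> = real (2*j+2) * (real (2*j+2) + 1) / 2 / real (3*j+4)" by (simp only: gauss_real)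
    finally have "total_weight w0 = 3 * (real (2*j+2) * (real (2*j+2) + 1) / 2 / real (3*j+4))"
      using w0(2) by simp
    also have "\<dots> = V" unfolding V_def by (simp add: field_simps)
    finally show ?thesis .
  qed
  have lb: "V \<le> total_weight w" if "frac_cover 2 (3*j+3) w" for w
  proof -
    have "(\<Sum>q\<in>grid (3*j+3). Fb j (fst q) (snd q) (3*j+2 - fst q - snd q)) \<le> total_weight w"
    proof (rule lower_bound_pairs[OF _ _ _ that])
      show "1 \<le> 3*j+3" by simp
      show "\<And>q. 0 \<le> Fb j (fst q) (snd q) (3*j+2 - fst q - snd q)" by (rule Fb_nonneg)
      fix c0 c1 \<beta> :: real assume c: "c0 \<noteq> 0 \<or> c1 \<noteq> 0"
      show "(\<Sum>q\<in>{q\<in>grid (3*j+3). c0 * real (fst q) + c1 * real (snd q) = \<beta>}.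
              Fb j (fst q) (snd q) (3*j+2 - fst q - snd q)) \<le> 1"
      proof (rule line_bound[OF _ _ _ _ _ c])
        show "3*j+2 + 1 = 3*j+3" by simp
        show "\<And>x y z. Fb j x y z = Fb j y x z" by (auto simp: Fb_def ac_simps)
        show "\<And>x y z. Fb j x y z = Fb j x z y" by (auto simp: Fb_def ac_simps)
        show "\<And>t. t \<le> 3*j+2 \<Longrightarrow> (\<Sum>b\<le>3*j+2-t. Fb j t b (3*j+2-t-b)) \<le> 1"
          unfolding Fb_line_val by auto
        show "\<And>A f. A \<subseteq> grid (3*j+3) \<Longrightarrow> f = fst \<or> f = snd \<or> f = (\<lambda>q. 3*j+2 - fst q - snd q) \<Longrightarrow> gapp f A
           \<Longrightarrow> (\<Sum>q\<in>A. Fb j (fst q) (snd q) (3*j+2 - fst q - snd q)) \<le> 1"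
          by (rule slant_b)
      qed
    qed
    then show ?thesis using total_b[of j] by (simp add: V_def)
  qed
  have "Inf (total_weight ` {w. frac_cover 2 (3*j+3) w}) = V"
  proof (rule cInf_eq_minimum)
    show "V \<in> total_weight ` {w. frac_cover 2 (3*j+3) w}"
      by (rule image_eqI[of _ _ w0]) (use w0 tw0 in auto)
    show "\<And>x. x \<in> total_weight ` {w. frac_cover 2 (3*j+3) w} \<Longrightarrow> V \<le> x" using lb by auto
  qed
  then show ?thesis by (simp add: fstar_def V_def)
qed

theorem mainTheorem2:
  fixes j :: nat
  shows "fstar (3*j+2) 2 = real (2*j+1) + real (2*j+1) / real (3*j+2) \<and>
         fstar (3*j+3) 2 = real (2*j+2) + real (j+1) / real (3*j+4)"
  using case_a case_b by blast

end
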